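(* Let $d\ge 2$ and let $c_0,\dots,c_7\in\mathbb{Z}_d$. If the $d$-state first degree cellular automaton with parameters $\langle c_0,\dots,c_7\rangle$ is reversible for every number of cells $n\in\mathbb{N}$ under the null boundary condition, then $c_4\cdot c_6\equiv 0 \pmod{\mathrm{rad}(d)}$.
   Context: Fix an integer $d\ge 2$ and the state set $S=\mathbb{Z}_d=\{0,1,\dots,d-1\}$. A first degree cellular automaton (FDCA) with parameters $\langle c_0,\dots,c_7\rangle$, $c_i\in\mathbb{Z}_d$, is the one-dimensional 3-neighborhood cellular automaton whose local rule $R:S^3\to S$ is $R(x,y,z)=c_0xyz+c_1xy+c_2xz+c_3yz+c_4x+c_5y+c_6z+c_7 \pmod d$. For $n\in\mathbb{N}$, $n\ge1$, the $n$-cell automaton under the null boundary condition acts on configurations $x=(x_0,\dots,x_{n-1})\in S^n$ by the global map $G_n:S^n\to S^n$, $G_n(x)_i=R(x_{i-1},x_i,x_{i+1})$ for $0\le i\le n-1$, with the convention $x_{-1}=x_n=0$. The automaton is reversible for a given $n$ if $G_n$ is a bijection. $\mathrm{rad}(d)=\prod_{p\mid d,\ p\text{ prime}}p$ is the product of the distinct primes dividing $d$; since $\mathrm{rad}(d)\mid d$, congruences of elements of $\mathbb{Z}_d$ modulo $\mathrm{rad}(d)$ are well defined. *)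

theory Defs
  imports "HOL-Computational_Algebra.Primes"
begin

definition fdca_rule :: "int \<Rightarrow> (nat \<Rightarrow> int) \<Rightarrow> int \<Rightarrow> int \<Rightarrow> int \<Rightarrow> int" where
  "fdca_rule d c x y z =
     (c 0 * x * y * z + c 1 * x * y + c 2 * x * z + c 3 * y * z
      + c 4 * x + c 5 * y + c 6 * z + c 7) mod d"

text \<open>n-cell configurations: functions on cell indices 0..n-1 with values in Z_d,
  extended by 0 outside (this encodes the null boundary x_{-1} = x_n = 0).\<close>

definition configs :: "int \<Rightarrow> nat \<Rightarrow> (nat \<Rightarrow> int) set" where
  "configs d n = {x. \<forall>i. (i < n \<longrightarrow> 0 \<le> x i \<and> x i < d) \<and> (n \<le> i \<longrightarrow> x i = 0)}"

definition global_map :: "int \<Rightarrow> (nat \<Rightarrow> int) \<Rightarrow> nat \<Rightarrow> (nat \<Rightarrow> int) \<Rightarrow> (nat \<Rightarrow> int)" where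
  "global_map d c n x = (\<lambda>i. if i < n then
      fdca_rule d c (if i = 0 then 0 else x (i - 1)) (x i) (if i + 1 < n then x (i + 1) else 0)
    else 0)"

definition reversible :: "int \<Rightarrow> (nat \<Rightarrow> int) \<Rightarrow> nat \<Rightarrow> bool" where
  "reversible d c n \<longleftrightarrow> bij_betw (global_map d c n) (configs d n) (configs d n)"

definition rad :: "int \<Rightarrow> int" where
  "rad d = (\<Prod>p\<in>prime_factors d. p)"

end

theory Submission
  imports Defs "HOL-Number_Theory.Number_Theory"
begin

lemma rule_mod: "fdca_rule p c (x mod p) (y mod p) (z mod p) = fdca_rule p c x y z"
proof -
  have cx: "[x mod p = x] (mod p)" "[y mod p = y] (mod p)" "[z mod p = z] (mod p)"
    by (simp_all add: cong_def)
  have "[c 0 * (x mod p) * (y mod p) * (z mod p) + c 1 * (x mod p) * (y mod p) + c 2 * (x mod p) * (z mod p)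
       + c 3 * (y mod p) * (z mod p) + c 4 * (x mod p) + c 5 * (y mod p) + c 6 * (z mod p) + c 7
     = c 0 * x * y * z + c 1 * x * y + c 2 * x * z + c 3 * y * z + c 4 * x + c 5 * y + c 6 * z + c 7] (mod p)"
    by (intro cong_add cong_mult cong_refl cx)
  then show ?thesis by (simp add: fdca_rule_def cong_def)
qed

lemma rule_range: "p > 0 \<Longrightarrow> 0 \<le> fdca_rule p c x y z \<and> fdca_rule p c x y z < p"
  by (simp add: fdca_rule_def)

lemma rule_kappa:
  assumes "p dvd (c 0 * a * b + c 2 * a + c 3 * b + c 6)"
  shows "fdca_rule p c a b z = fdca_rule p c a b 0"
proof -
  obtain q where q: "c 0 * a * b + c 2 * a + c 3 * b + c 6 = p * q" using assms by blast
  have "c 0 * a * b * z + c 1 * a * b + c 2 * a * z + c 3 * b * z + c 4 * a + c 5 * b + c 6 * z + c 7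
     = (c 1 * a * b + c 4 * a + c 5 * b + c 7) + (c 0 * a * b + c 2 * a + c 3 * b + c 6) * z"
    by (simp add: algebra_simps)
  also have "\<dots> = (c 1 * a * b + c 4 * a + c 5 * b + c 7) + p * (q * z)" unfolding q by (simp add: mult.assoc)
  finally have E: "c 0 * a * b * z + c 1 * a * b + c 2 * a * z + c 3 * b * z + c 4 * a + c 5 * b + c 6 * z + c 7
     = (c 1 * a * b + c 4 * a + c 5 * b + c 7) + p * (q * z)" .
  show ?thesis unfolding fdca_rule_def E by simp
qed

lemma rule_lambda:
  assumes "p dvd (c 0 * b * z + c 1 * b + c 2 * z + c 4)"
  shows "fdca_rule p c a b z = fdca_rule p c 0 b z"
proof -
  obtain q where q: "c 0 * b * z + c 1 * b + c 2 * z + c 4 = p * q" using assms by blast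
  have "c 0 * a * b * z + c 1 * a * b + c 2 * a * z + c 3 * b * z + c 4 * a + c 5 * b + c 6 * z + c 7
     = (c 3 * b * z + c 5 * b + c 6 * z + c 7) + (c 0 * b * z + c 1 * b + c 2 * z + c 4) * a"
    by (simp add: algebra_simps)
  also have "\<dots> = (c 3 * b * z + c 5 * b + c 6 * z + c 7) + p * (q * a)" unfolding q by (simp add: mult.assoc)
  finally have E: "c 0 * a * b * z + c 1 * a * b + c 2 * a * z + c 3 * b * z + c 4 * a + c 5 * b + c 6 * z + c 7
     = (c 3 * b * z + c 5 * b + c 6 * z + c 7) + p * (q * a)" .
  show ?thesis unfolding fdca_rule_def E by simp
qed

lemma finite_configs: "finite (configs p n)"
proof -
  have "configs p n \<subseteq> (\<lambda>xs i. if i < n then xs ! i else 0) ` {xs. set xs \<subseteq> {0..<p} \<and> length xs = n}"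
  proof
    fix x assume x: "x \<in> configs p n"
    show "x \<in> (\<lambda>xs i. if i < n then xs ! i else 0) ` {xs. set xs \<subseteq> {0..<p} \<and> length xs = n}"
    proof
      show "x = (\<lambda>i. if i < n then map x [0..<n] ! i else 0)"
        using x by (auto simp: configs_def)
      show "map x [0..<n] \<in> {xs. set xs \<subseteq> {0..<p} \<and> length xs = n}"
        using x by (auto simp: configs_def)
    qed
  qed
  moreover have "finite {xs. set xs \<subseteq> {0..<p} \<and> length xs = n}"
    by (rule finite_lists_length_eq) simp
  ultimately show ?thesis by (meson finite_imageI finite_subset)
qed

lemma reduce:
  assumes d: "d \<ge> 2" and p: "prime p" "p dvd d" and rev: "reversible d c n"
  shows "inj_on (global_map p c n) (configs p n)"
proof (rule finite_surj_inj[OF finite_configs], rule subsetI)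
  fix y assume y: "y \<in> configs p n"
  have p0: "p > 0" using p prime_gt_0_int by blast
  have "p \<le> d" using p d by (simp add: zdvd_imp_le)
  then have "y \<in> configs d n" using y by (force simp: configs_def)
  then obtain x where x: "x \<in> configs d n" "global_map d c n x = y"
    using rev unfolding reversible_def bij_betw_def by (metis imageE)
  define x' where "x' = (\<lambda>i. x i mod p)"
  have x': "x' \<in> configs p n" using x p0 by (auto simp: configs_def x'_def)
  have "global_map p c n x' = y"
  proof
    fix i
    show "global_map p c n x' i = y i"
    proof (cases "i < n")
      case True
      have "global_map p c n x' i = fdca_rule p c ((if i = 0 then 0 else x (i - 1)) mod p) (x i mod p) ((if i + 1 < n then x (i + 1) else 0) mod p)"
        using True by (auto simp: global_map_def x'_def)
      also have "\<dots> = fdca_rule p c (if i = 0 then 0 else x (i - 1)) (x i) (if i + 1 < n then x (i + 1) else 0)"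
        by (rule rule_mod)
      also have "\<dots> = y i mod p"
        using True p by (simp add: x(2)[symmetric] global_map_def fdca_rule_def mod_mod_cancel)
      also have "\<dots> = y i" using y True by (simp add: configs_def)
      finally show ?thesis .
    next
      case False then show ?thesis using y by (simp add: global_map_def configs_def)
    qed
  qed
  then show "y \<in> global_map p c n ` configs p n" using x' by blast
qed

lemma rule_cong:
  assumes "[x = x'] (mod p)" "[y = y'] (mod p)" "[z = z'] (mod p)"
  shows "fdca_rule p c x y z = fdca_rule p c x' y' z'"
  by (metis assms cong_def rule_mod)

lemma cong_modl: "[e mod p = e] (mod p)" by (simp add: cong_def)

lemma inv_ex:
  fixes p a :: int
  assumes "prime p" "\<not> p dvd a"
  obtains iv where "[a * iv = 1] (mod p)"
proof -
  have "coprime a p" using assms by (meson prime_imp_coprime coprime_commute)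
  then show ?thesis using cong_solve_coprime_int that by blast
qed

lemma pig:
  assumes p0: "p > 0" and inj: "inj_on (global_map p c n) (configs p n)"
    and sz: "\<And>z. 0 \<le> z \<Longrightarrow> z < p \<Longrightarrow> s(j:=z) \<in> configs p n"
    and x': "x' \<in> configs p n" "x' \<notin> (\<lambda>z. s(j:=z)) ` {0..<p}"
    and agree: "\<And>z i. 0 \<le> z \<Longrightarrow> z < p \<Longrightarrow> i \<noteq> j \<Longrightarrow> global_map p c n (s(j:=z)) i = global_map p c n x' i"
  shows False
proof -
  let ?A = "insert x' ((\<lambda>z. s(j:=z)) ` {0..<p})"
  have Asub: "?A \<subseteq> configs p n" using sz x' by auto
  have ag: "\<And>x i. x \<in> ?A \<Longrightarrow> i \<noteq> j \<Longrightarrow> global_map p c n x i = global_map p c n x' i" using agree by auto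
  have inj2: "inj_on (\<lambda>x. global_map p c n x j) ?A"
  proof (rule inj_onI)
    fix x y assume xy: "x \<in> ?A" "y \<in> ?A" "global_map p c n x j = global_map p c n y j"
    have "global_map p c n x = global_map p c n y"
    proof
      fix i show "global_map p c n x i = global_map p c n y i"
        using xy ag[of x i] ag[of y i] by (cases "i = j") auto
    qed
    then show "x = y" using inj Asub xy by (meson inj_onD subsetD)
  qed
  have img: "(\<lambda>x. global_map p c n x j) ` ?A \<subseteq> {0..<p}"
    using rule_range[OF p0] p0 by (auto simp: global_map_def)
  have "card ?A \<le> card {0..<p}"
    using card_inj_on_le[OF inj2 img] by simp
  moreover have "card ?A = nat p + 1"
  proof -
    have "inj_on (\<lambda>z. s(j:=z)) {0..<p}" by (rule inj_onI) (metis fun_upd_same)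
    then have "card ((\<lambda>z. s(j:=z)) ` {0..<p}) = nat p" by (simp add: card_image)
    then show ?thesis using x'(2) by simp
  qed
  ultimately show False by simp
qed

lemma I1:
  assumes pr: "prime p" and c6: "\<not> p dvd c 6" and inj: "inj_on (global_map p c 2) (configs p 2)"
  shows "p dvd c 3"
proof (rule ccontr)
  assume c3: "\<not> p dvd c 3"
  obtain iv where iv: "[c 3 * iv = 1] (mod p)" using inv_ex[OF pr c3] by blast
  have p0: "p > 0" using pr prime_gt_0_int by blast
  define t where "t = (- c 6 * iv) mod p"
  define b where "b = (- c 5 * iv) mod p"
  define s where "s = (\<lambda>i::nat. if i = 0 then t else (0::int))"
  define x' where "x' = (\<lambda>i::nat. if i = 1 then b else (0::int))"
  have tc: "[t = - c 6 * iv] (mod p)" unfolding t_def by (rule cong_modl)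
  have bc: "[b = - c 5 * iv] (mod p)" unfolding b_def by (rule cong_modl)
  have "[c 3 * t + c 6 = c 3 * (- c 6 * iv) + c 6] (mod p)"
    by (intro cong_add cong_mult cong_refl tc)
  moreover have "c 3 * (- c 6 * iv) + c 6 = c 6 * (1 - c 3 * iv)" by (simp add: algebra_simps)
  moreover have "[c 6 * (1 - c 3 * iv) = c 6 * (1 - 1)] (mod p)"
    by (intro cong_mult cong_diff cong_refl iv)
  ultimately have "[c 3 * t + c 6 = 0] (mod p)" by (metis cong_trans mult_zero_right diff_self)
  then have kap: "p dvd (c 0 * 0 * t + c 2 * 0 + c 3 * t + c 6)" by (simp add: cong_0_iff)
  have tnz: "t \<noteq> 0"
  proof
    assume "t = 0" then show False using kap c6 by simp
  qed
  have tr: "0 \<le> t" "t < p" "0 \<le> b" "b < p" using p0 by (simp_all add: t_def b_def)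
  show False
  proof (rule pig[OF p0 inj, of s 1 x'])
    fix z :: int assume "0 \<le> z" "z < p"
    then show "s(1 := z) \<in> configs p 2" using tr by (auto simp: configs_def s_def)
  next
    show "x' \<in> configs p 2" using tr by (auto simp: configs_def x'_def)
    show "x' \<notin> (\<lambda>z. s(1 := z)) ` {0..<p}"
    proof
      assume "x' \<in> (\<lambda>z. s(1 := z)) ` {0..<p}"
      then obtain z where "x' = s(1 := z)" by blast
      then have "x' 0 = s 0" by simp
      then show False using tnz by (simp add: x'_def s_def)
    qed
  next
    fix z :: int and i :: nat assume "0 \<le> z" "z < p" "i \<noteq> 1"
    show "global_map p c 2 (s(1 := z)) i = global_map p c 2 x' i"
    proof (cases "i = 0")
      case True
      have "global_map p c 2 (s(1 := z)) i = fdca_rule p c 0 t z"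
        using True by (simp add: global_map_def s_def)
      also have "\<dots> = fdca_rule p c 0 t 0" using rule_kappa[OF kap] by simp
      also have "\<dots> = fdca_rule p c 0 (- c 6 * iv) 0" by (intro rule_cong cong_refl tc)
      also have "\<dots> = fdca_rule p c 0 0 (- c 5 * iv)" by (simp add: fdca_rule_def algebra_simps)
      also have "\<dots> = fdca_rule p c 0 0 b" by (intro rule_cong cong_refl cong_sym[OF bc])
      also have "\<dots> = global_map p c 2 x' i" using True by (simp add: global_map_def x'_def)
      finally show ?thesis .
    next
      case False
      then show ?thesis using \<open>i \<noteq> 1\<close> by (simp add: global_map_def)
    qed
  qed
qed

lemma I2:
  assumes pr: "prime p" and c4: "\<not> p dvd c 4" and inj: "inj_on (global_map p c 2) (configs p 2)"
  shows "p dvd c 1"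
proof (rule ccontr)
  assume c1: "\<not> p dvd c 1"
  obtain iv where iv: "[c 1 * iv = 1] (mod p)" using inv_ex[OF pr c1] by blast
  have p0: "p > 0" using pr prime_gt_0_int by blast
  define t where "t = (- c 4 * iv) mod p"
  define b where "b = (- c 5 * iv) mod p"
  define s where "s = (\<lambda>i::nat. if i = 1 then t else (0::int))"
  define x' where "x' = (\<lambda>i::nat. if i = 0 then b else (0::int))"
  have tc: "[t = - c 4 * iv] (mod p)" unfolding t_def by (rule cong_modl)
  have bc: "[b = - c 5 * iv] (mod p)" unfolding b_def by (rule cong_modl)
  have "[c 1 * t + c 4 = c 1 * (- c 4 * iv) + c 4] (mod p)"
    by (intro cong_add cong_mult cong_refl tc)
  moreover have "c 1 * (- c 4 * iv) + c 4 = c 4 * (1 - c 1 * iv)" by (simp add: algebra_simps)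
  moreover have "[c 4 * (1 - c 1 * iv) = c 4 * (1 - 1)] (mod p)"
    by (intro cong_mult cong_diff cong_refl iv)
  ultimately have "[c 1 * t + c 4 = 0] (mod p)" by (metis cong_trans mult_zero_right diff_self)
  then have kap: "p dvd (c 0 * t * 0 + c 1 * t + c 2 * 0 + c 4)" by (simp add: cong_0_iff)
  have tnz: "t \<noteq> 0"
  proof
    assume "t = 0" then show False using kap c4 by simp
  qed
  have tr: "0 \<le> t" "t < p" "0 \<le> b" "b < p" using p0 by (simp_all add: t_def b_def)
  show False
  proof (rule pig[OF p0 inj, of s 0 x'])
    fix z :: int assume "0 \<le> z" "z < p"
    then show "s(0 := z) \<in> configs p 2" using tr by (auto simp: configs_def s_def)
  next
    show "x' \<in> configs p 2" using tr by (auto simp: configs_def x'_def)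
    show "x' \<notin> (\<lambda>z. s(0 := z)) ` {0..<p}"
    proof
      assume "x' \<in> (\<lambda>z. s(0 := z)) ` {0..<p}"
      then obtain z where "x' = s(0 := z)" by blast
      then have "x' 1 = s 1" by simp
      then show False using tnz by (simp add: x'_def s_def)
    qed
  next
    fix z :: int and i :: nat assume "0 \<le> z" "z < p" "i \<noteq> 0"
    show "global_map p c 2 (s(0 := z)) i = global_map p c 2 x' i"
    proof (cases "i = 1")
      case True
      have "global_map p c 2 (s(0 := z)) i = fdca_rule p c z t 0"
        using True by (simp add: global_map_def s_def)
      also have "\<dots> = fdca_rule p c 0 t 0" using rule_lambda[OF kap] by simp
      also have "\<dots> = fdca_rule p c 0 (- c 4 * iv) 0" by (intro rule_cong cong_refl tc)
      also have "\<dots> = fdca_rule p c (- c 5 * iv) 0 0" by (simp add: fdca_rule_def algebra_simps)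
      also have "\<dots> = fdca_rule p c b 0 0" by (intro rule_cong cong_refl cong_sym[OF bc])
      also have "\<dots> = global_map p c 2 x' i" using True by (simp add: global_map_def x'_def)
      finally show ?thesis .
    next
      case False
      then show ?thesis using \<open>i \<noteq> 0\<close> by (simp add: global_map_def)
    qed
  qed
qed

lemma I3:
  assumes pr: "prime p" and c6: "\<not> p dvd c 6" and c3: "p dvd c 3"
    and inj: "inj_on (global_map p c 3) (configs p 3)"
    and tu: "0 \<le> t" "t < p" "t \<noteq> 0" "0 \<le> u" "u < p"
    and kap: "p dvd (c 0 * t * u + c 2 * t + c 3 * u + c 6)"
  shows False
proof -
  obtain iv where iv: "[c 6 * iv = 1] (mod p)" using inv_ex[OF pr c6] by blast
  have p0: "p > 0" using pr prime_gt_0_int by blast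
  have c30: "[c 3 = 0] (mod p)" using c3 by (simp add: cong_0_iff)
  define b where "b = (u + c 5 * t * iv) mod p"
  define w where "w = ((c 1 * t * u + c 4 * t + c 5 * u - c 5 * b) * iv) mod p"
  define s where "s = (\<lambda>i::nat. if i = 0 then t else if i = 1 then u else (0::int))"
  define x' where "x' = (\<lambda>i::nat. if i = 1 then b else if i = 2 then w else (0::int))"
  have bc: "[b = u + c 5 * t * iv] (mod p)" unfolding b_def by (rule cong_modl)
  have wc: "[w = (c 1 * t * u + c 4 * t + c 5 * u - c 5 * b) * iv] (mod p)" unfolding w_def by (rule cong_modl)
  have tr: "0 \<le> b" "b < p" "0 \<le> w" "w < p" using p0 by (simp_all add: w_def b_def)
  show False
  proof (rule pig[OF p0 inj, of s 2 x'])
    fix z :: int assume "0 \<le> z" "z < p"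
    then show "s(2 := z) \<in> configs p 3" using tu by (auto simp: configs_def s_def)
  next
    show "x' \<in> configs p 3" using tr by (auto simp: configs_def x'_def)
    show "x' \<notin> (\<lambda>z. s(2 := z)) ` {0..<p}"
    proof
      assume "x' \<in> (\<lambda>z. s(2 := z)) ` {0..<p}"
      then obtain z where "x' = s(2 := z)" by blast
      then have "x' 0 = s 0" by simp
      then show False using tu by (simp add: x'_def s_def)
    qed
  next
    fix z :: int and i :: nat assume "0 \<le> z" "z < p" "i \<noteq> 2"
    show "global_map p c 3 (s(2 := z)) i = global_map p c 3 x' i"
    proof (cases "i = 0")
      case True
      have "global_map p c 3 (s(2 := z)) i = (c 3 * t * u + c 5 * t + c 6 * u + c 7) mod p"
        using True by (simp add: global_map_def s_def fdca_rule_def)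
      also have "\<dots> = (c 6 * b + c 7) mod p"
      proof -
        have "[c 3 * t * u + c 5 * t + c 6 * u + c 7 = 0 * t * u + c 5 * t + c 6 * u + c 7] (mod p)"
          by (intro cong_add cong_mult cong_refl c30)
        also have "0 * t * u + c 5 * t + c 6 * u + c 7 = c 6 * u + c 5 * t * 1 + c 7" by simp
        also have "[c 6 * u + c 5 * t * 1 + c 7 = c 6 * u + c 5 * t * (c 6 * iv) + c 7] (mod p)"
          by (intro cong_add cong_mult cong_refl cong_sym[OF iv])
        also have "c 6 * u + c 5 * t * (c 6 * iv) + c 7 = c 6 * (u + c 5 * t * iv) + c 7"
          by (simp add: algebra_simps)
        also have "[c 6 * (u + c 5 * t * iv) + c 7 = c 6 * b + c 7] (mod p)"
          by (intro cong_add cong_mult cong_refl cong_sym[OF bc])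
        finally have "[c 3 * t * u + c 5 * t + c 6 * u + c 7 = c 6 * b + c 7] (mod p)" .
        then show ?thesis by (simp add: cong_def)
      qed
      also have "\<dots> = global_map p c 3 x' i" using True by (simp add: global_map_def x'_def fdca_rule_def)
      finally show ?thesis .
    next
      case False
      show ?thesis
      proof (cases "i = 1")
        case True
        have "global_map p c 3 (s(2 := z)) i = fdca_rule p c t u z"
          using True by (simp add: global_map_def s_def)
        also have "\<dots> = fdca_rule p c t u 0" using rule_kappa[OF kap] by simp
        also have "\<dots> = (c 1 * t * u + c 4 * t + c 5 * u + c 7) mod p"
          by (simp add: fdca_rule_def)
        also have "\<dots> = (c 3 * b * w + c 5 * b + c 6 * w + c 7) mod p"
        proof -
          let ?K = "c 1 * t * u + c 4 * t + c 5 * u - c 5 * b"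
          have "[c 3 * b * w + c 5 * b + c 6 * w + c 7 = 0 * b * w + c 5 * b + c 6 * (?K * iv) + c 7] (mod p)"
            by (intro cong_add cong_mult cong_refl c30 wc)
          also have "0 * b * w + c 5 * b + c 6 * (?K * iv) + c 7 = c 5 * b + ?K * (c 6 * iv) + c 7"
            by (simp add: algebra_simps)
          also have "[c 5 * b + ?K * (c 6 * iv) + c 7 = c 5 * b + ?K * 1 + c 7] (mod p)"
            by (intro cong_add cong_mult cong_refl iv)
          also have "c 5 * b + ?K * 1 + c 7 = c 1 * t * u + c 4 * t + c 5 * u + c 7"
            by (simp add: algebra_simps)
          finally have "[c 3 * b * w + c 5 * b + c 6 * w + c 7 = c 1 * t * u + c 4 * t + c 5 * u + c 7] (mod p)" .
          then have "[c 1 * t * u + c 4 * t + c 5 * u + c 7 = c 3 * b * w + c 5 * b + c 6 * w + c 7] (mod p)"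
            by (rule cong_sym)
          then show ?thesis by (simp add: cong_def)
        qed
        also have "\<dots> = global_map p c 3 x' i" using True by (simp add: global_map_def x'_def fdca_rule_def)
        finally show ?thesis .
      next
        case False
        then show ?thesis using \<open>i \<noteq> 2\<close> \<open>i \<noteq> 0\<close> by (simp add: global_map_def)
      qed
    qed
  qed
qed

fun useq :: "int \<Rightarrow> (nat \<Rightarrow> int) \<Rightarrow> int \<Rightarrow> nat \<Rightarrow> int" where
  "useq p c iv 0 = 0"
| "useq p c iv (Suc 0) = 1"
| "useq p c iv (Suc (Suc k)) = ((- (c 4 * useq p c iv k + c 5 * useq p c iv (Suc k))) * iv) mod p"

lemma useq_range: "p > 1 \<Longrightarrow> 0 \<le> useq p c iv k \<and> useq p c iv k < p"
  by (induction p c iv k rule: useq.induct) auto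

lemma useq_rec:
  assumes iv: "[c 6 * iv = 1] (mod p)"
  shows "[c 4 * useq p c iv k + c 5 * useq p c iv (Suc k) + c 6 * useq p c iv (Suc (Suc k)) = 0] (mod p)"
proof -
  let ?K = "c 4 * useq p c iv k + c 5 * useq p c iv (Suc k)"
  have "[c 6 * useq p c iv (Suc (Suc k)) = c 6 * ((- ?K) * iv)] (mod p)"
    by (simp add: cong_def mod_simps)
  also have "c 6 * ((- ?K) * iv) = (- ?K) * (c 6 * iv)" by (simp add: algebra_simps)
  also have "[(- ?K) * (c 6 * iv) = (- ?K) * 1] (mod p)" by (intro cong_mult cong_refl iv)
  finally have "[?K + c 6 * useq p c iv (Suc (Suc k)) = ?K + (- ?K) * 1] (mod p)"
    by (intro cong_add cong_refl)
  then show ?thesis by simp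
qed

lemma Lin:
  assumes pr: "prime p" and c4: "\<not> p dvd c 4" and c6: "\<not> p dvd c 6"
    and c0: "p dvd c 0" and c1: "p dvd c 1" and c2: "p dvd c 2" and c3: "p dvd c 3"
    and inj: "\<And>n. n \<ge> 1 \<Longrightarrow> inj_on (global_map p c n) (configs p n)"
  shows False
proof -
  obtain iv where iv: "[c 6 * iv = 1] (mod p)" using inv_ex[OF pr c6] by blast
  have p1: "p > 1" using pr prime_gt_1_int by blast
  define u where "u = useq p c iv"
  have ur: "\<And>k. 0 \<le> u k \<and> u k < p" unfolding u_def using useq_range[OF p1] by blast
  have rec: "\<And>k. [c 4 * u k + c 5 * u (Suc k) + c 6 * u (Suc (Suc k)) = 0] (mod p)"
    unfolding u_def by (rule useq_rec[of c iv p, OF iv])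
  define Q where "Q = (\<lambda>k. (u k, u (Suc k)))"
  have Qback: "Q a = Q b" if "Q (Suc a) = Q (Suc b)" for a b
  proof -
    have e1: "u (Suc a) = u (Suc b)" and e2: "u (Suc (Suc a)) = u (Suc (Suc b))"
      using that by (auto simp: Q_def)
    have "[c 4 * u a + c 5 * u (Suc a) + c 6 * u (Suc (Suc a)) = c 4 * u b + c 5 * u (Suc b) + c 6 * u (Suc (Suc b))] (mod p)"
      using rec[of a] rec[of b] by (meson cong_sym cong_trans)
    then have "[c 4 * u a = c 4 * u b] (mod p)"
      unfolding e1 e2 by (simp add: cong_add_rcancel)
    moreover have "coprime (c 4) p" using pr c4 by (meson prime_imp_coprime coprime_commute)
    ultimately have "[u a = u b] (mod p)" by (simp add: cong_mult_lcancel)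
    then have "u a = u b" using ur[of a] ur[of b] by (simp add: cong_def)
    then show ?thesis using e1 by (simp add: Q_def)
  qed
  have "\<not> inj Q"
  proof
    assume "inj Q"
    have "range Q \<subseteq> {0..<p} \<times> {0..<p}" using ur by (auto simp: Q_def)
    then have "finite (range Q)" by (meson finite_SigmaI finite_atLeastLessThan_int finite_subset)
    then have "finite (UNIV :: nat set)" using \<open>inj Q\<close> by (meson finite_imageD)
    then show False by simp
  qed
  then obtain i j where ij: "Q i = Q j" "i < j"
    by (metis injI linorder_neqE_nat)
  have down: "k \<le> i \<Longrightarrow> Q (i - k) = Q (j - k)" for k
  proof (induction k)
    case 0 then show ?case using ij by simp
  next
    case (Suc k)
    then have "Q (Suc (i - Suc k)) = Q (Suc (j - Suc k))"
      using ij(2) by (simp add: Suc_diff_Suc)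
    then show ?case by (rule Qback)
  qed
  define m where "m = j - i"
  have Qm: "Q 0 = Q m" using down[of i] by (simp add: m_def)
  have u0: "u 0 = 0" and u1: "u 1 = 1" by (simp_all add: u_def)
  have um: "u m = 0" using Qm u0 by (simp add: Q_def)
  have m2: "m \<ge> 2"
  proof (rule ccontr)
    assume "\<not> m \<ge> 2"
    moreover have "m \<ge> 1" using ij by (simp add: m_def)
    ultimately have "m = 1" by simp
    then show False using um u1 by simp
  qed
  define n where "n = m - 1"
  have n1: "n \<ge> 1" using m2 by (simp add: n_def)
  define x where "x = (\<lambda>k. if k < n then u (Suc k) else 0)"
  define z0 where "z0 = (\<lambda>k::nat. (0::int))"
  have xc: "x \<in> configs p n" using ur by (auto simp: configs_def x_def)
  have zc: "z0 \<in> configs p n" using p1 by (auto simp: configs_def z0_def)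
  have xz: "x \<noteq> z0"
  proof
    assume "x = z0" then have "x 0 = 0" by (simp add: z0_def)
    then show False using n1 u1 by (simp add: x_def)
  qed
  have "global_map p c n x = global_map p c n z0"
  proof
    fix k show "global_map p c n x k = global_map p c n z0 k"
    proof (cases "k < n")
      case True
      have a1: "(if k = 0 then 0 else x (k - 1)) = u k"
        using True u0 by (cases k) (auto simp: x_def)
      have a3: "(if k + 1 < n then x (k + 1) else 0) = u (Suc (Suc k))"
      proof (cases "k + 1 < n")
        case True then show ?thesis by (simp add: x_def)
      next
        case False
        then have "Suc (Suc k) = m" using \<open>k < n\<close> m2 by (simp add: n_def)
        then show ?thesis using um False by simp
      qed
      have a2: "x k = u (Suc k)" using True by (simp add: x_def)
      have "global_map p c n x k = fdca_rule p c (if k = 0 then 0 else x (k - 1)) (x k) (if k + 1 < n then x (k + 1) else 0)"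
        using True by (simp add: global_map_def)
      also have "\<dots> = fdca_rule p c (u k) (u (Suc k)) (u (Suc (Suc k)))"
        by (simp only: a1 a2 a3)
      also have "\<dots> = fdca_rule p c 0 0 0"
      proof -
        let ?a = "u k" and ?b = "u (Suc k)" and ?z = "u (Suc (Suc k))"
        have c00: "[c 0 = 0] (mod p)" "[c 1 = 0] (mod p)" "[c 2 = 0] (mod p)" "[c 3 = 0] (mod p)"
          using c0 c1 c2 c3 by (simp_all add: cong_0_iff)
        have "[c 0 * ?a * ?b * ?z + c 1 * ?a * ?b + c 2 * ?a * ?z + c 3 * ?b * ?z + c 4 * ?a + c 5 * ?b + c 6 * ?z + c 7
            = 0 * ?a * ?b * ?z + 0 * ?a * ?b + 0 * ?a * ?z + 0 * ?b * ?z + c 4 * ?a + c 5 * ?b + c 6 * ?z + c 7] (mod p)"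
          by (intro cong_add cong_mult cong_refl c00)
        also have "0 * ?a * ?b * ?z + 0 * ?a * ?b + 0 * ?a * ?z + 0 * ?b * ?z + c 4 * ?a + c 5 * ?b + c 6 * ?z + c 7
            = (c 4 * ?a + c 5 * ?b + c 6 * ?z) + c 7" by simp
        also have "[(c 4 * ?a + c 5 * ?b + c 6 * ?z) + c 7 = 0 + c 7] (mod p)"
          by (intro cong_add cong_refl rec)
        finally show ?thesis by (simp add: fdca_rule_def cong_def)
      qed
      also have "\<dots> = global_map p c n z0 k" using True by (simp add: global_map_def z0_def)
      finally show ?thesis .
    next
      case False then show ?thesis by (simp add: global_map_def)
    qed
  qed
  then show False using inj[OF n1] xc zc xz by (meson inj_onD)
qed

lemma prime_case:
  assumes d: "d \<ge> 2" and pr: "prime p" and pd: "p dvd d" and rev: "\<forall>n\<ge>1. reversible d c n"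
  shows "p dvd c 4 * c 6"
proof (rule ccontr)
  assume "\<not> p dvd c 4 * c 6"
  then have c4: "\<not> p dvd c 4" and c6: "\<not> p dvd c 6" by auto
  have inj: "\<And>n. n \<ge> 1 \<Longrightarrow> inj_on (global_map p c n) (configs p n)"
    using reduce[OF d pr pd] rev by blast
  have p1: "p > 1" using pr prime_gt_1_int by blast
  have c3: "p dvd c 3" using I1[OF pr c6 inj] by simp
  have c1: "p dvd c 1" using I2[OF pr c4 inj] by simp
  have c0: "p dvd c 0"
  proof (rule ccontr)
    assume c0: "\<not> p dvd c 0"
    obtain iv where iv: "[c 0 * iv = 1] (mod p)" using inv_ex[OF pr c0] by blast
    define u where "u = (- (c 2 + c 6) * iv) mod p"
    have uc: "[u = - (c 2 + c 6) * iv] (mod p)" unfolding u_def by (rule cong_modl)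
    have c30: "[c 3 = 0] (mod p)" using c3 by (simp add: cong_0_iff)
    have "[c 0 * 1 * u + c 2 * 1 + c 3 * u + c 6 = c 0 * 1 * (- (c 2 + c 6) * iv) + c 2 * 1 + 0 * u + c 6] (mod p)"
      by (intro cong_add cong_mult cong_refl uc c30)
    also have "c 0 * 1 * (- (c 2 + c 6) * iv) + c 2 * 1 + 0 * u + c 6 = (c 2 + c 6) * (1 - c 0 * iv)"
      by (simp add: algebra_simps)
    also have "[(c 2 + c 6) * (1 - c 0 * iv) = (c 2 + c 6) * (1 - 1)] (mod p)"
      by (intro cong_mult cong_diff cong_refl iv)
    finally have "p dvd (c 0 * 1 * u + c 2 * 1 + c 3 * u + c 6)" by (simp add: cong_0_iff)
    moreover have "0 \<le> u" "u < p" using p1 by (simp_all add: u_def)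
    ultimately show False using I3[OF pr c6 c3 inj[of 3], of 1 u] p1 by simp
  qed
  have c2: "p dvd c 2"
  proof (rule ccontr)
    assume c2: "\<not> p dvd c 2"
    obtain iv where iv: "[c 2 * iv = 1] (mod p)" using inv_ex[OF pr c2] by blast
    define t where "t = (- c 6 * iv) mod p"
    have tc: "[t = - c 6 * iv] (mod p)" unfolding t_def by (rule cong_modl)
    have c00: "[c 0 = 0] (mod p)" using c0 by (simp add: cong_0_iff)
    have "c 0 * t * 0 + c 2 * t + c 3 * 0 + c 6 = c 2 * t + c 6" by simp
    also have "[c 2 * t + c 6 = c 2 * (- c 6 * iv) + c 6] (mod p)"
      by (intro cong_add cong_mult cong_refl tc)
    also have "c 2 * (- c 6 * iv) + c 6 = c 6 * (1 - c 2 * iv)"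
      by (simp add: algebra_simps)
    also have "[c 6 * (1 - c 2 * iv) = c 6 * (1 - 1)] (mod p)"
      by (intro cong_mult cong_diff cong_refl iv)
    finally have kap: "p dvd (c 0 * t * 0 + c 2 * t + c 3 * 0 + c 6)" by (simp add: cong_0_iff)
    have tnz: "t \<noteq> 0"
    proof
      assume "t = 0" then show False using kap c6 by simp
    qed
    have "0 \<le> t" "t < p" using p1 by (simp_all add: t_def)
    then show False using I3[OF pr c6 c3 inj[of 3] _ _ tnz _ _ kap] p1 by simp
  qed
  show False using Lin[OF pr c4 c6 c0 c1 c2 c3 inj] .
qed

lemma prod_primes_dvd:
  fixes x :: int
  assumes "finite P" "\<And>p. p \<in> P \<Longrightarrow> prime p \<and> p dvd x"
  shows "(\<Prod>p\<in>P. p) dvd x"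
  using assms
proof (induction P rule: finite_induct)
  case empty then show ?case by simp
next
  case (insert q P)
  have q: "prime q" "q dvd x" using insert.prems by auto
  have IH: "(\<Prod>p\<in>P. p) dvd x" using insert by auto
  have "\<not> q dvd (\<Prod>p\<in>P. p)"
  proof
    assume "q dvd (\<Prod>p\<in>P. p)"
    then obtain r where "r \<in> P" "q dvd r" using prime_dvd_prod_iff[OF insert.hyps(1) q(1)] by auto
    then have "q = r" using insert.prems primes_dvd_imp_eq q(1) by blast
    then show False using \<open>r \<in> P\<close> insert.hyps(2) by simp
  qed
  then have "coprime q (\<Prod>p\<in>P. p)" using q(1) by (simp add: prime_imp_coprime)
  then show ?case using divides_mult[OF q(2) IH] insert.hyps by simp
qed

theorem lemma3:
  fixes d :: int and c :: "nat \<Rightarrow> int"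
  assumes "d \<ge> 2"
    and "\<forall>i<8. 0 \<le> c i \<and> c i < d"
    and "\<forall>n\<ge>1. reversible d c n"
  shows "(c 4 * c 6) mod rad d = 0"
proof -
  have "rad d dvd c 4 * c 6"
    unfolding rad_def
  proof (rule prod_primes_dvd)
    show "finite (prime_factors d)" by simp
    fix p assume "p \<in> prime_factors d"
    then have "prime p" "p dvd d" by auto
    then show "prime p \<and> p dvd c 4 * c 6" using prime_case[OF assms(1) _ _ assms(3)] by blast
  qed
  then show ?thesis by simp
qed

end
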